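(* Let $(\Omega,\mathcal F)$ be a measurable space and $\mathcal P$ a σ-convex family of probability measures on $\mathcal F$. The following are equivalent: (1) $\mathcal P$ has the class (S) property and, for a $\mathcal P$-q.s. disjointly supported alternative $\mathcal R$ of $\mathcal P$ with supports $\{S_Q\}_{Q\in\mathcal R}$, every $P\in\mathcal P$ satisfies $P\big(\bigcup_{Q\in\mathcal R(P)}S_Q\big)=1$; (2) $\mathcal P$ is pre-Hahn-localizable.
   Context: A set is $\mathcal P$-polar if contained in some $N\in\mathcal F$ with $P(N)=0$ for all $P\in\mathcal P$. A measure $\mu$ on $\mathcal F$ is supported with support $S\in\mathcal F$ if $\mu(\Omega\setminus S)=0$ and, whenever $N\in\mathcal F$ with $\mu(N\cap S)=0$, $N\cap S$ is $\mathcal P$-polar. $\mathcal P$ has the class (S) property if there is a family $\mathcal R$ of supported probability measures on $\mathcal F$ (a supported alternative) with the same null sets as $\mathcal P$; it is $\mathcal P$-q.s. disjointly supported if $S_Q\cap S_R$ is $\mathcal P$-polar for $Q\neq R$ in $\mathcal R$. $\mathcal R(P)=\{Q\in\mathcal R:P(S_Q)>0\}$. $\mathcal A\lll\mathcal B$ means every $A\in\mathcal A$ is absolutely continuous w.r.t. some $B\in\mathcal B$; $\mathrm{sconv}$ denotes countable convex combinations; σ-convex means closed under countable convex combinations. $\mathcal P$ is pre-Hahn-localizable if there are a family $\mathcal Q$ of probability measures on $\mathcal F$ and sets $S_Q\in\mathcal F$ with $Q(S_R)=\delta_{QR}$ for $Q,R\in\mathcal Q$ and $\mathcal Q\lll\mathcal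 P\lll\mathrm{sconv}(\mathcal Q)$. *)

theory Defs
  imports "HOL-Probability.Probability"
begin

text \<open>Throughout, M is the measurable space (Omega, F): Omega = space M, F = sets M.
  Families of measures are sets of measures; a measure "on F" has sets equal to sets M.\<close>

definition prob_on :: "'a measure \<Rightarrow> 'a measure \<Rightarrow> bool" where
  "prob_on M Q \<longleftrightarrow> prob_space Q \<and> sets Q = sets M"

definition polar :: "'a measure \<Rightarrow> 'a measure set \<Rightarrow> 'a set \<Rightarrow> bool" where
  "polar M \<P> A \<longleftrightarrow> (\<exists>N\<in>sets M. A \<subseteq> N \<and> (\<forall>P\<in>\<P>. emeasure P N = 0))"

definition supported_with :: "'a measure \<Rightarrow> 'a measure set \<Rightarrow> 'a measure \<Rightarrow> 'a set \<Rightarrow> bool" where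
  "supported_with M \<P> \<mu> S \<longleftrightarrow>
     S \<in> sets M \<and> emeasure \<mu> (space M - S) = 0 \<and>
     (\<forall>N\<in>sets M. emeasure \<mu> (N \<inter> S) = 0 \<longrightarrow> polar M \<P> (N \<inter> S))"

definition same_null_sets :: "'a measure \<Rightarrow> 'a measure set \<Rightarrow> 'a measure set \<Rightarrow> bool" where
  "same_null_sets M \<P> \<R> \<longleftrightarrow>
     (\<forall>N\<in>sets M. (\<forall>P\<in>\<P>. emeasure P N = 0) \<longleftrightarrow> (\<forall>Q\<in>\<R>. emeasure Q N = 0))"

definition supported_alternative ::
  "'a measure \<Rightarrow> 'a measure set \<Rightarrow> 'a measure set \<Rightarrow> ('a measure \<Rightarrow> 'a set) \<Rightarrow> bool" where
  "supported_alternative M \<P> \<R> S \<longleftrightarrow>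
     (\<forall>Q\<in>\<R>. prob_on M Q \<and> supported_with M \<P> Q (S Q)) \<and> same_null_sets M \<P> \<R>"

definition class_S :: "'a measure \<Rightarrow> 'a measure set \<Rightarrow> bool" where
  "class_S M \<P> \<longleftrightarrow> (\<exists>\<R> S. supported_alternative M \<P> \<R> S)"

definition qs_disjointly_supported ::
  "'a measure \<Rightarrow> 'a measure set \<Rightarrow> 'a measure set \<Rightarrow> ('a measure \<Rightarrow> 'a set) \<Rightarrow> bool" where
  "qs_disjointly_supported M \<P> \<R> S \<longleftrightarrow>
     (\<forall>Q\<in>\<R>. \<forall>R\<in>\<R>. Q \<noteq> R \<longrightarrow> polar M \<P> (S Q \<inter> S R))"

definition R_of :: "'a measure set \<Rightarrow> ('a measure \<Rightarrow> 'a set) \<Rightarrow> 'a measure \<Rightarrow> 'a measure set" where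
  "R_of \<R> S P = {Q\<in>\<R>. emeasure P (S Q) > 0}"

text \<open>A <<< B: every A in the first family is absolutely continuous w.r.t. some B in the
  second (library: absolutely_continuous B A means null_sets B is a subset of null_sets A)\<close>
definition abs_cont_family :: "'a measure set \<Rightarrow> 'a measure set \<Rightarrow> bool" where
  "abs_cont_family \<A> \<B> \<longleftrightarrow> (\<forall>A\<in>\<A>. \<exists>B\<in>\<B>. absolutely_continuous B A)"

definition mixture :: "'a measure \<Rightarrow> (nat \<Rightarrow> 'a measure) \<Rightarrow> (nat \<Rightarrow> real) \<Rightarrow> 'a measure" where
  "mixture M Q a = measure_of (space M) (sets M) (\<lambda>A. \<Sum>n. ennreal (a n) * emeasure (Q n) A)"

definition sconv :: "'a measure \<Rightarrow> 'a measure set \<Rightarrow> 'a measure set" where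
  "sconv M \<Q> = {mixture M Q a | Q a. (\<forall>n. Q n \<in> \<Q>) \<and> (\<forall>n. a n \<ge> 0) \<and> a sums 1}"

definition sigma_convex :: "'a measure \<Rightarrow> 'a measure set \<Rightarrow> bool" where
  "sigma_convex M \<P> \<longleftrightarrow> sconv M \<P> \<subseteq> \<P>"

definition pre_Hahn_localizable :: "'a measure \<Rightarrow> 'a measure set \<Rightarrow> bool" where
  "pre_Hahn_localizable M \<P> \<longleftrightarrow>
     (\<exists>\<Q> S. (\<forall>Q\<in>\<Q>. prob_on M Q \<and> S Q \<in> sets M) \<and>
            (\<forall>Q\<in>\<Q>. \<forall>R\<in>\<Q>. emeasure Q (S R) = (if Q = R then 1 else 0)) \<and>
            abs_cont_family \<Q> \<P> \<and> abs_cont_family \<P> (sconv M \<Q>))"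

end

theory Submission
  imports Defs
begin

lemma sets_mixture[simp]: "sets (mixture M Q a) = sets M"
  unfolding mixture_def by (simp add: sets.space_closed)

lemma space_mixture[simp]: "space (mixture M Q a) = space M"
  unfolding mixture_def by (simp add: sets.space_closed)

lemma suminf_swap_ennreal:
  fixes f :: "nat \<Rightarrow> nat \<Rightarrow> ennreal"
  shows "(\<Sum>i. \<Sum>n. f n i) = (\<Sum>n. \<Sum>i. f n i)"
proof -
  have "(\<Sum>i. \<Sum>n. f n i) = (\<integral>\<^sup>+i. (\<Sum>n. f n i) \<partial>count_space UNIV)"
    by (simp add: nn_integral_count_space_nat)
  also have "\<dots> = (\<Sum>n. \<integral>\<^sup>+i. f n i \<partial>count_space UNIV)"
    by (rule nn_integral_suminf) auto
  also have "\<dots> = (\<Sum>n. \<Sum>i. f n i)"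
    by (simp add: nn_integral_count_space_nat)
  finally show ?thesis .
qed

lemma emeasure_mixture:
  assumes "\<And>n. sets (Q n) = sets M" "A \<in> sets M"
  shows "emeasure (mixture M Q a) A = (\<Sum>n. ennreal (a n) * emeasure (Q n) A)"
  unfolding mixture_def
proof (rule emeasure_measure_of_sigma[OF sets.sigma_algebra_axioms _ _ assms(2)])
  show "positive (sets M) (\<lambda>A. \<Sum>n. ennreal (a n) * emeasure (Q n) A)"
    by (simp add: positive_def)
  show "countably_additive (sets M) (\<lambda>A. \<Sum>n. ennreal (a n) * emeasure (Q n) A)"
    unfolding countably_additive_def
  proof (intro allI impI)
    fix A :: "nat \<Rightarrow> _" assume A: "range A \<subseteq> sets M" "disjoint_family A"
    have "(\<Sum>i. \<Sum>n. ennreal (a n) * emeasure (Q n) (A i)) = (\<Sum>n. \<Sum>i. ennreal (a n) * emeasure (Q n) (A i))"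
      by (rule suminf_swap_ennreal)
    also have "\<dots> = (\<Sum>n. ennreal (a n) * emeasure (Q n) (\<Union>i. A i))"
      using A assms(1) by (simp add: suminf_emeasure)
    finally show "(\<Sum>i. \<Sum>n. ennreal (a n) * emeasure (Q n) (A i)) = (\<Sum>n. ennreal (a n) * emeasure (Q n) (\<Union>i. A i))" .
  qed
qed

lemma null_mixture:
  assumes "\<And>n. sets (Q n) = sets M" "A \<in> sets M"
  shows "emeasure (mixture M Q a) A = 0 \<longleftrightarrow> (\<forall>n. a n > 0 \<longrightarrow> emeasure (Q n) A = 0)"
proof -
  have "emeasure (mixture M Q a) A = 0 \<longleftrightarrow> (\<forall>n. ennreal (a n) * emeasure (Q n) A = 0)"
    using assms by (simp add: emeasure_mixture suminf_eq_zero_iff)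
  then show ?thesis using not_less ennreal_eq_0_iff mult_eq_0_iff by metis
qed

lemma countable_ae_disjoint:
  assumes fm: "finite_measure P"
    and pos: "\<And>i. i \<in> I \<Longrightarrow> A i \<in> sets P \<and> measure P (A i) > 0"
    and dis: "\<And>i j. i \<in> I \<Longrightarrow> j \<in> I \<Longrightarrow> i \<noteq> j \<Longrightarrow> A i \<inter> A j \<in> null_sets P"
  shows "countable I"
proof -
  interpret finite_measure P by fact
  have sumeq: "measure P (\<Union>i\<in>X. A i) = (\<Sum>i\<in>X. measure P (A i))" if "finite X" "X \<subseteq> I" for X
    using that
  proof (induction X rule: finite_induct)
    case empty then show ?case by simp
  next
    case (insert x F)
    let ?U = "\<Union>i\<in>F. A i"
    have Us: "?U \<in> sets P" using insert pos by auto
    have Ax: "A x \<in> sets P" using insert pos by auto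
    have "A x \<inter> ?U = (\<Union>j\<in>F. A x \<inter> A j)" by auto
    also have "\<dots> \<in> null_sets P"
      using insert dis by (intro null_sets_UN' countable_finite) auto
    finally have nl: "A x \<inter> ?U \<in> null_sets P" .
    have "(\<Union>i\<in>insert x F. A i) = A x \<union> (?U - (A x \<inter> ?U))" by auto
    moreover have "measure P (A x \<union> (?U - (A x \<inter> ?U))) = measure P (A x) + measure P (?U - (A x \<inter> ?U))"
      using Ax Us nl by (intro finite_measure_Union) auto
    ultimately have "measure P (\<Union>i\<in>insert x F. A i) = measure P (A x) + measure P (?U - (A x \<inter> ?U))"
      by simp
    also have "measure P (?U - (A x \<inter> ?U)) = measure P ?U"
      using Us nl by (rule measure_Diff_null_set)
    finally show ?case using insert by simp
  qed
  let ?M = "measure P (space P)"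
  have *: "I \<subseteq> (\<Union>n. {i\<in>I. 1 / Suc n < measure P (A i)})"
  proof
    fix i assume i: "i \<in> I"
    then have "measure P (A i) > 0" using pos by auto
    then obtain n where "1 / Suc n < measure P (A i)"
      by (metis Suc_eq_plus1 nat_approx_posE of_nat_Suc)
    then show "i \<in> (\<Union>n. {i\<in>I. 1 / Suc n < measure P (A i)})" using i by auto
  qed
  have **: "finite {i\<in>I. 1 / Suc n < measure P (A i)}" for n
  proof (rule ccontr)
    assume "infinite {i\<in>I. 1 / Suc n < measure P (A i)}" (is "infinite ?X")
    then obtain X where X: "finite X" "card X = nat (ceiling (?M * Suc n)) + 1" "X \<subseteq> ?X"
      using infinite_arbitrarily_large[of ?X "nat (ceiling (?M * Suc n)) + 1"] by blast
    have "real (card X) / Suc n = (\<Sum>i\<in>X. 1 / Suc n)" by simp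
    also have "\<dots> \<le> (\<Sum>i\<in>X. measure P (A i))"
      using X by (intro sum_mono) auto
    also have "\<dots> = measure P (\<Union>i\<in>X. A i)" using X by (intro sumeq[symmetric]) auto
    also have "\<dots> \<le> ?M" using X pos by (intro finite_measure_mono) (auto dest: sets.sets_into_space)
    finally have "real (card X) / Suc n \<le> ?M" .
    hence "real (card X) \<le> ?M * Suc n" by (simp add: divide_le_eq)
    moreover have "?M * Suc n \<le> real (nat (ceiling (?M * Suc n)))" by (rule real_nat_ceiling_ge)
    moreover have "real (card X) = real (nat (ceiling (?M * Suc n))) + 1" using X(2) by simp
    ultimately show False by linarith
  qed
  show ?thesis
    by (rule countable_subset[OF *]) (intro countable_UN countableI_type countable_finite[OF **])
qed


lemma polar_null:
  assumes "polar M \<P> X" "P \<in> \<P>" "X \<in> sets M" "sets P = sets M"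
  shows "emeasure P X = 0"
proof -
  from assms(1) obtain N where N: "N \<in> sets M" "X \<subseteq> N" "\<forall>P\<in>\<P>. emeasure P N = 0"
    unfolding polar_def by auto
  have "emeasure P X \<le> emeasure P N" using N assms by (intro emeasure_mono) auto
  then show ?thesis using N(3) assms(2) by (metis le_zero_eq)
qed

lemma dir21:
  assumes probs: "\<forall>P\<in>\<P>. prob_on M P"
    and H: "pre_Hahn_localizable M \<P>"
  shows "\<exists>\<R> S. supported_alternative M \<P> \<R> S \<and> qs_disjointly_supported M \<P> \<R> S \<and>
                 (\<forall>P\<in>\<P>. emeasure P (\<Union>Q\<in>R_of \<R> S P. S Q) = 1)"
proof -
  from H obtain \<Q> S where Qp: "\<And>Q. Q\<in>\<Q> \<Longrightarrow> prob_on M Q \<and> S Q \<in> sets M"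
    and delta: "\<And>Q R. Q\<in>\<Q> \<Longrightarrow> R\<in>\<Q> \<Longrightarrow> emeasure Q (S R) = (if Q = R then 1 else 0)"
    and ac1: "abs_cont_family \<Q> \<P>" and ac2: "abs_cont_family \<P> (sconv M \<Q>)"
    using H unfolding pre_Hahn_localizable_def by metis
  have setsQ: "sets Q = sets M" if "Q \<in> \<Q>" for Q using Qp[OF that] by (simp add: prob_on_def)
  have setsP: "sets P = sets M" if "P \<in> \<P>" for P using probs that by (simp add: prob_on_def)
  have dom: "\<exists>Qs (a::nat\<Rightarrow>real). (\<forall>n. Qs n \<in> \<Q>) \<and> (\<forall>N\<in>sets M. (\<forall>n. 0 < a n \<longrightarrow> emeasure (Qs n) N = 0) \<longrightarrow> emeasure P N = 0)"
    if P: "P \<in> \<P>" for P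
  proof -
    from ac2 P obtain B where B: "B \<in> sconv M \<Q>" "absolutely_continuous B P"
      unfolding abs_cont_family_def by blast
    from B(1) obtain Qs a where Qs: "B = mixture M Qs a" "\<forall>n. Qs n \<in> \<Q>"
      unfolding sconv_def by blast
    have "emeasure P N = 0" if N: "N \<in> sets M" "\<forall>n. 0 < a n \<longrightarrow> emeasure (Qs n) N = 0" for N
    proof -
      have "emeasure (mixture M Qs a) N = 0" using null_mixture[of Qs M N a] N Qs(2) setsQ by auto
      then have "N \<in> null_sets B" using N Qs(1) by (auto intro: null_setsI)
      then have "N \<in> null_sets P" using B(2) unfolding absolutely_continuous_def by (rule subsetD[rotated])
      then show ?thesis by (rule null_setsD1)
    qed
    then have "\<forall>N\<in>sets M. (\<forall>n. 0 < a n \<longrightarrow> emeasure (Qs n) N = 0) \<longrightarrow> emeasure P N = 0" by blast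
    with Qs(2) show ?thesis by blast
  qed
  have small: "emeasure Q A = 0" if "Q \<in> \<Q>" "R \<in> \<Q>" "Q \<noteq> R" "A \<subseteq> S R" for Q R A
  proof -
    have "emeasure Q A \<le> emeasure Q (S R)" using that Qp setsQ by (intro emeasure_mono) auto
    then show ?thesis using delta[of Q R] that by simp
  qed
  have QSQ: "emeasure Q (space M - S Q) = 0" if "Q \<in> \<Q>" for Q
  proof -
    interpret prob_space Q using Qp[OF that] by (simp add: prob_on_def)
    have sp: "space Q = space M" using setsQ[OF that] by (rule sets_eq_imp_space_eq)
    have "emeasure Q (space Q - S Q) = emeasure Q (space Q) - emeasure Q (S Q)"
      using Qp[OF that] setsQ[OF that] by (intro emeasure_compl) auto
    then show ?thesis using delta[OF that that] sp emeasure_space_1 by simp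
  qed
  have supp: "supported_with M \<P> Q (S Q)" if Q: "Q \<in> \<Q>" for Q
    unfolding supported_with_def
  proof (intro conjI ballI impI)
    show "S Q \<in> sets M" using Qp Q by auto
    show "emeasure Q (space M - S Q) = 0" using QSQ Q by auto
    fix N assume N: "N \<in> sets M" "emeasure Q (N \<inter> S Q) = 0"
    show "polar M \<P> (N \<inter> S Q)" unfolding polar_def
    proof (intro bexI conjI ballI)
      fix P assume P: "P \<in> \<P>"
      from dom[OF P] obtain Qs and a :: "nat \<Rightarrow> real" where Qs: "\<forall>n. Qs n \<in> \<Q>"
        "\<forall>N\<in>sets M. (\<forall>n. 0 < a n \<longrightarrow> emeasure (Qs n) N = 0) \<longrightarrow> emeasure P N = 0" by blast
      have "emeasure (Qs n) (N \<inter> S Q) = 0" for n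
        using N small[of "Qs n" Q "N \<inter> S Q"] Qs(1) Q by (cases "Qs n = Q") auto
      then show "emeasure P (N \<inter> S Q) = 0" using Qs(2) N Qp Q by auto
    qed (use N Qp Q in auto)
  qed
  have sns: "same_null_sets M \<P> \<Q>"
    unfolding same_null_sets_def
  proof (intro ballI, rule iffI)
    fix N assume N: "N \<in> sets M" and a: "\<forall>P\<in>\<P>. emeasure P N = 0"
    show "\<forall>Q\<in>\<Q>. emeasure Q N = 0"
    proof
      fix Q assume Q: "Q \<in> \<Q>"
      from ac1 Q obtain P where P: "P \<in> \<P>" "absolutely_continuous P Q"
        unfolding abs_cont_family_def by blast
      have "N \<in> null_sets P" using N a P setsP by auto
      then show "emeasure Q N = 0" using P unfolding absolutely_continuous_def by auto
    qed
  next
    fix N assume N: "N \<in> sets M" and a: "\<forall>Q\<in>\<Q>. emeasure Q N = 0"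
    show "\<forall>P\<in>\<P>. emeasure P N = 0"
    proof
      fix P assume P: "P \<in> \<P>"
      from dom[OF P] obtain Qs and a :: "nat \<Rightarrow> real" where Qs: "\<forall>n. Qs n \<in> \<Q>"
        "\<forall>N\<in>sets M. (\<forall>n. 0 < a n \<longrightarrow> emeasure (Qs n) N = 0) \<longrightarrow> emeasure P N = 0" by blast
      then show "emeasure P N = 0" using a N by auto
    qed
  qed
  have qs: "qs_disjointly_supported M \<P> \<Q> S"
    unfolding qs_disjointly_supported_def
  proof (intro ballI impI)
    fix Q R assume QR: "Q \<in> \<Q>" "R \<in> \<Q>" "Q \<noteq> R"
    show "polar M \<P> (S Q \<inter> S R)" unfolding polar_def
    proof (intro bexI conjI ballI)
      fix P assume P: "P \<in> \<P>"
      from dom[OF P] obtain Qs and a :: "nat \<Rightarrow> real" where Qs: "\<forall>n. Qs n \<in> \<Q>"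
        "\<forall>N\<in>sets M. (\<forall>n. 0 < a n \<longrightarrow> emeasure (Qs n) N = 0) \<longrightarrow> emeasure P N = 0" by blast
      have "emeasure (Qs n) (S Q \<inter> S R) = 0" for n
      proof (cases "Qs n = Q")
        case True then show ?thesis using small[of Q R "S Q \<inter> S R"] QR by auto
      next
        case False then show ?thesis using small[of "Qs n" Q "S Q \<inter> S R"] QR Qs(1) by auto
      qed
      then show "emeasure P (S Q \<inter> S R) = 0" using Qs(2) QR Qp by auto
    qed (use QR Qp in auto)
  qed
  have un: "emeasure P (\<Union>Q\<in>R_of \<Q> S P. S Q) = 1" if P: "P \<in> \<P>" for P
  proof -
    interpret prob_space P using probs P by (simp add: prob_on_def)
    have sp: "space P = space M" using setsP[OF P] by (rule sets_eq_imp_space_eq)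
    from dom[OF P] obtain Qs and a :: "nat \<Rightarrow> real" where Qs: "\<forall>n. Qs n \<in> \<Q>"
      "\<forall>N\<in>sets M. (\<forall>n. 0 < a n \<longrightarrow> emeasure (Qs n) N = 0) \<longrightarrow> emeasure P N = 0" by blast
    define I where "I = {n. 0 < a n \<and> emeasure P (S (Qs n)) > 0}"
    have RI: "R_of \<Q> S P = Qs ` I"
    proof
      show "R_of \<Q> S P \<subseteq> Qs ` I"
      proof
        fix Q assume "Q \<in> R_of \<Q> S P"
        then have Q: "Q \<in> \<Q>" "emeasure P (S Q) > 0" unfolding R_of_def by auto
        have "\<exists>n. 0 < a n \<and> Qs n = Q"
        proof (rule ccontr)
          assume "\<not> ?thesis"
          then have "emeasure (Qs n) (S Q) = 0" if "0 < a n" for n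
            using small[of "Qs n" Q "S Q"] Qs(1) Q that by auto
          then have "emeasure P (S Q) = 0" using Qs(2) Qp Q by auto
          then show False using Q by simp
        qed
        then show "Q \<in> Qs ` I" using Q unfolding I_def by auto
      qed
      show "Qs ` I \<subseteq> R_of \<Q> S P" unfolding I_def R_of_def using Qs(1) by auto
    qed
    let ?U = "\<Union>n\<in>I. S (Qs n)"
    have U: "(\<Union>Q\<in>R_of \<Q> S P. S Q) = ?U" using RI by auto
    have Us: "?U \<in> sets M" using Qp Qs(1) by auto
    let ?A = "space M - (\<Union>n\<in>{n. 0 < a n}. S (Qs n))"
    let ?B = "\<Union>n\<in>{n. emeasure P (S (Qs n)) = 0}. S (Qs n)"
    have An: "?A \<in> null_sets P"
    proof -
      have "?A \<in> sets M" using Qp Qs(1) by auto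
      moreover have "emeasure (Qs n) ?A = 0" if "0 < a n" for n
      proof -
        have "emeasure (Qs n) ?A \<le> emeasure (Qs n) (space M - S (Qs n))"
          using that Qp Qs(1) setsQ by (intro emeasure_mono) auto
        then show ?thesis using QSQ Qs(1) by simp
      qed
      ultimately show ?thesis using Qs(2) setsP[OF P] by auto
    qed
    have Bn: "?B \<in> null_sets P"
      using Qp Qs(1) setsP[OF P] by (intro null_sets_UN') auto
    have "space M - ?U \<subseteq> ?A \<union> ?B"
    proof
      fix x assume x: "x \<in> space M - ?U"
      show "x \<in> ?A \<union> ?B"
      proof (cases "x \<in> ?A")
        case True then show ?thesis by simp
      next
        case False
        then obtain n where n: "0 < a n" "x \<in> S (Qs n)" using x by auto
        have "n \<notin> I" using x n by auto
        then have "emeasure P (S (Qs n)) = 0" using n unfolding I_def by simp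
        then show ?thesis using n by auto
      qed
    qed
    moreover have AB: "?A \<union> ?B \<in> null_sets P" using An Bn by (rule null_sets.Un)
    moreover have "space M - ?U \<in> sets P" using Us setsP[OF P] sp by (metis sets.compl_sets)
    ultimately have C: "space M - ?U \<in> null_sets P"
      by (metis null_sets_subset)
    have "emeasure P (space P - (space M - ?U)) = emeasure P (space P)"
      using C by (intro emeasure_Diff_null_set sets.top)
    moreover have "?U \<subseteq> space M" using Us by (rule sets.sets_into_space)
    then have "space P - (space M - ?U) = ?U" using sp by auto
    ultimately show ?thesis using U emeasure_space_1 by simp
  qed
  show ?thesis
    using supp Qp sns qs un unfolding supported_alternative_def by blast
qed


lemma le_of_approx:
  fixes x y :: real
  assumes "\<And>k. x < y + 1 / Suc k"
  shows "x \<le> y"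
proof (rule ccontr)
  assume "\<not> x \<le> y"
  then have "x - y > 0" by simp
  then obtain k where "1 / Suc k < x - y"
    by (metis nat_approx_posE)
  with assms[of k] show False by simp
qed

lemma dominate:
  assumes probs: "\<forall>P\<in>\<P>. prob_on M P" and sc: "sigma_convex M \<P>"
    and Qprob: "prob_on M Q" and supp: "supported_with M \<P> Q SQ"
    and snull: "\<And>N. N \<in> sets M \<Longrightarrow> (\<forall>P\<in>\<P>. emeasure P N = 0) \<Longrightarrow> emeasure Q N = 0"
    and ne: "\<P> \<noteq> {}"
  shows "\<exists>P\<in>\<P>. absolutely_continuous P Q"
proof -
  interpret Qp: prob_space Q using Qprob by (simp add: prob_on_def)
  have setsQ: "sets Q = sets M" using Qprob by (simp add: prob_on_def)
  have setsP: "sets P = sets M" if "P \<in> \<P>" for P using probs that by (simp add: prob_on_def)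
  have mix_in: "mixture M Ps (\<lambda>n. (1/2)^Suc n) \<in> \<P>" if "\<And>n. Ps n \<in> \<P>" for Ps
  proof -
    have "mixture M Ps (\<lambda>n. (1/2)^Suc n) \<in> sconv M \<P>"
      unfolding sconv_def using that power_half_series by fastforce
    then show ?thesis using sc unfolding sigma_convex_def by blast
  qed
  have mix_null: "null_sets (mixture M Ps (\<lambda>n. (1/2)^Suc n)) \<subseteq> null_sets (Ps n)"
    if "\<And>n. Ps n \<in> \<P>" for Ps n
  proof
    fix N assume N: "N \<in> null_sets (mixture M Ps (\<lambda>n. (1/2)^Suc n))"
    then have Ns: "N \<in> sets M" by (simp add: null_sets_def)
    have "emeasure (mixture M Ps (\<lambda>n. (1/2)^Suc n)) N = 0" using N by (rule null_setsD1)
    then have "emeasure (Ps n) N = 0"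
      using null_mixture[of Ps M N "\<lambda>n. (1/2)^Suc n"] Ns setsP that by simp
    then show "N \<in> null_sets (Ps n)" using Ns setsP that by (auto intro: null_setsI)
  qed
  define s where "s P = Sup (measure Q ` null_sets P)" for P
  have bdd: "bdd_above (measure Q ` null_sets P)" for P
    by (rule bdd_aboveI[of _ 1]) (auto simp: Qp.prob_le_1)
  have nen: "measure Q ` null_sets P \<noteq> {}" for P by auto
  have s_upper: "measure Q N \<le> s P" if "N \<in> null_sets P" for N P
    unfolding s_def using that bdd by (intro cSup_upper) auto
  have s_nonneg: "0 \<le> s P" for P using s_upper[of "{}" P] by simp
  have s_mono: "s P \<le> s P'" if "null_sets P \<subseteq> null_sets P'" for P P'
    unfolding s_def using that bdd nen by (intro cSup_subset_mono) auto
  have attain: "\<exists>N\<in>null_sets P. measure Q N = s P" if P: "P \<in> \<P>" for P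
  proof -
    have "\<exists>N. N \<in> null_sets P \<and> s P - 1 / Suc k < measure Q N" for k
    proof -
      have "s P - 1 / Suc k < s P" by simp
      then show ?thesis unfolding s_def using less_cSupD[OF nen] by blast
    qed
    then obtain Nk where Nk: "\<And>k. Nk k \<in> null_sets P" "\<And>k. s P - 1 / Suc k < measure Q (Nk k)"
      by metis
    let ?U = "\<Union>k. Nk k"
    have U: "?U \<in> null_sets P" using Nk(1) by (rule null_sets_UN)
    have Us: "?U \<in> sets Q" using U setsP[OF P] setsQ by (simp add: null_sets_def)
    have "measure Q (Nk k) \<le> measure Q ?U" for k
      using Us by (intro Qp.finite_measure_mono) auto
    then have "s P \<le> measure Q ?U" using Nk(2) by (intro le_of_approx) (smt (verit))
    moreover have "measure Q ?U \<le> s P" using U by (rule s_upper)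
    ultimately show ?thesis using U by (intro bexI[of _ ?U]) auto
  qed
  define \<beta> where "\<beta> = Inf (s ` \<P>)"
  have bddb: "bdd_below (s ` \<P>)" by (rule bdd_belowI[of _ 0]) (auto simp: s_nonneg)
  have "\<exists>P\<in>\<P>. s P < \<beta> + 1 / Suc n" for n
  proof -
    have "Inf (s ` \<P>) < \<beta> + 1 / Suc n" unfolding \<beta>_def by simp
    then show ?thesis using cInf_lessD[of "s ` \<P>"] ne by blast
  qed
  then obtain Ps where Ps: "\<And>n. Ps n \<in> \<P>" "\<And>n. s (Ps n) < \<beta> + 1 / Suc n" by metis
  define Pst where "Pst = mixture M Ps (\<lambda>n. (1/2)^Suc n)"
  have Pst: "Pst \<in> \<P>" unfolding Pst_def using Ps(1) by (rule mix_in)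
  have "s Pst \<le> s (Ps n)" for n unfolding Pst_def using mix_null Ps(1) by (intro s_mono) auto
  then have "s Pst \<le> \<beta>" using Ps(2) by (intro le_of_approx) (smt (verit))
  moreover have "\<beta> \<le> s P" if "P \<in> \<P>" for P unfolding \<beta>_def using bddb that by (intro cInf_lower) auto
  ultimately have key: "s Pst \<le> s P" if "P \<in> \<P>" for P using that by fastforce
  from attain[OF Pst] obtain Nst where Nst: "Nst \<in> null_sets Pst" "measure Q Nst = s Pst" by blast
  have SQ: "SQ \<in> sets M" "emeasure Q (space M - SQ) = 0"
    using supp unfolding supported_with_def by auto
  have supp': "\<And>N. N \<in> sets M \<Longrightarrow> emeasure Q (N \<inter> SQ) = 0 \<Longrightarrow> polar M \<P> (N \<inter> SQ)"
    using supp unfolding supported_with_def by auto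
  have NstM: "Nst \<in> sets M" using Nst setsP[OF Pst] by (simp add: null_sets_def)
  define A where "A = Nst \<inter> SQ"
  have AM: "A \<in> sets M" unfolding A_def using NstM SQ by auto
  have A_null: "A \<in> null_sets Pst" using Nst(1) AM setsP[OF Pst] unfolding A_def
    by (metis Int_lower1 null_sets_subset)
  have spQ: "space Q = space M" using setsQ by (rule sets_eq_imp_space_eq)
  have "Nst - (space M - SQ) = A" using sets.sets_into_space[OF NstM] unfolding A_def by blast
  then have "measure Q A = measure Q (Nst - (space M - SQ))" by simp
  also have "\<dots> = measure Q Nst"
  proof (rule measure_Diff_null_set)
    show "Nst \<in> sets Q" using NstM setsQ by simp
    show "space M - SQ \<in> null_sets Q" using SQ setsQ spQ by (intro null_setsI) auto
  qed
  finally have QA: "measure Q A = s Pst" using Nst(2) by simp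
  have QA0: "measure Q A = 0"
  proof (rule ccontr)
    assume "measure Q A \<noteq> 0"
    then have "emeasure Q A \<noteq> 0" by (simp add: Qp.emeasure_eq_measure)
    then obtain P' where P': "P' \<in> \<P>" "emeasure P' A \<noteq> 0" using snull AM by blast
    define Ps2 where "Ps2 = (\<lambda>n::nat. if n = 0 then Pst else P')"
    have Ps2: "\<And>n. Ps2 n \<in> \<P>" unfolding Ps2_def using Pst P' by auto
    define P2 where "P2 = mixture M Ps2 (\<lambda>n. (1/2)^Suc n)"
    have P2: "P2 \<in> \<P>" unfolding P2_def using Ps2 by (rule mix_in)
    have "null_sets P2 \<subseteq> null_sets (Ps2 0)" unfolding P2_def by (rule mix_null[OF Ps2])
    then have n1: "null_sets P2 \<subseteq> null_sets Pst" by (simp add: Ps2_def)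
    have "null_sets P2 \<subseteq> null_sets (Ps2 1)" unfolding P2_def by (rule mix_null[OF Ps2])
    then have n2: "null_sets P2 \<subseteq> null_sets P'" by (simp add: Ps2_def)
    from attain[OF P2] obtain N2 where N2: "N2 \<in> null_sets P2" "measure Q N2 = s P2" by blast
    have N2M: "N2 \<in> sets M" using N2 setsP[OF P2] by (simp add: null_sets_def)
    have "s Pst \<le> s P2" using key P2 by blast
    then have le1: "measure Q A \<le> measure Q N2" using QA N2 by simp
    have "N2 \<union> A \<in> null_sets Pst" using N2(1) n1 A_null by blast
    then have le2: "measure Q (N2 \<union> A) \<le> measure Q A" using QA s_upper by simp
    have "measure Q (N2 \<union> A) = measure Q N2 + measure Q (A - N2)"
      using N2M AM setsQ by (intro Qp.finite_measure_Union') auto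
    then have "measure Q (A - N2) = 0" using le1 le2 measure_nonneg[of Q "A - N2"] by linarith
    have AN: "(Nst - N2) \<inter> SQ = A - N2" unfolding A_def by blast
    have "emeasure Q ((Nst - N2) \<inter> SQ) = 0"
      unfolding AN using \<open>measure Q (A - N2) = 0\<close> by (simp add: Qp.emeasure_eq_measure)
    then have "polar M \<P> ((Nst - N2) \<inter> SQ)" using supp' NstM N2M by blast
    then have "emeasure P' ((Nst - N2) \<inter> SQ) = 0"
      using P' NstM N2M SQ setsP by (intro polar_null) auto
    then have Z1: "A - N2 \<in> null_sets P'" using AM N2M setsP[OF P'(1)] unfolding AN
      by (auto intro!: null_setsI)
    have Z2: "N2 \<in> null_sets P'" using N2(1) n2 by blast
    have "A \<subseteq> (A - N2) \<union> N2" by blast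
    then have "A \<in> null_sets P'" using Z1 Z2 AM setsP[OF P'(1)]
      by (metis null_sets.Un null_sets_subset)
    then show False using P'(2) by (simp add: null_sets_def)
  qed
  have "absolutely_continuous Pst Q"
    unfolding absolutely_continuous_def
  proof
    fix N assume N: "N \<in> null_sets Pst"
    have NM: "N \<in> sets M" using N setsP[OF Pst] by (simp add: null_sets_def)
    have "measure Q N \<le> 0" using s_upper[OF N] QA QA0 by simp
    then have "emeasure Q N = 0" using Qp.emeasure_eq_measure by (simp add: measure_le_0_iff)
    then show "N \<in> null_sets Q" using NM setsQ by (auto intro: null_setsI)
  qed
  then show ?thesis using Pst by blast
qed


lemma dir12:
  assumes probs: "\<forall>P\<in>\<P>. prob_on M P" and sc: "sigma_convex M \<P>"
    and SA: "supported_alternative M \<P> \<R> S" and qs: "qs_disjointly_supported M \<P> \<R> S"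
    and un: "\<forall>P\<in>\<P>. emeasure P (\<Union>Q\<in>R_of \<R> S P. S Q) = 1"
  shows "pre_Hahn_localizable M \<P>"
proof -
  have Rp: "prob_on M Q" "supported_with M \<P> Q (S Q)" if "Q \<in> \<R>" for Q
    using SA that unfolding supported_alternative_def by auto
  have sns: "same_null_sets M \<P> \<R>" using SA unfolding supported_alternative_def by auto
  have setsP: "sets P = sets M" if "P \<in> \<P>" for P using probs that by (simp add: prob_on_def)
  have setsQ: "sets Q = sets M" if "Q \<in> \<R>" for Q using Rp(1)[OF that] by (simp add: prob_on_def)
  have SQ: "S Q \<in> sets M" "emeasure Q (space M - S Q) = 0" if "Q \<in> \<R>" for Q
    using Rp(2)[OF that] unfolding supported_with_def by auto
  have snull: "emeasure Q N = 0" if "N \<in> sets M" "\<forall>P\<in>\<P>. emeasure P N = 0" "Q \<in> \<R>" for N Q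
  proof -
    have "(\<forall>P\<in>\<P>. emeasure P N = 0) \<longleftrightarrow> (\<forall>Q\<in>\<R>. emeasure Q N = 0)"
      using bspec[OF sns[unfolded same_null_sets_def] that(1)] .
    then show ?thesis using that(2,3) by blast
  qed
  have polarR: "emeasure Q X = 0" if "polar M \<P> X" "Q \<in> \<R>" for Q X
  proof -
    from that(1) obtain N where N: "N \<in> sets M" "X \<subseteq> N" "\<forall>P\<in>\<P>. emeasure P N = 0"
      unfolding polar_def by auto
    have "emeasure Q N = 0" using snull N that(2) by blast
    moreover have "N \<in> sets Q" using N setsQ[OF that(2)] by simp
    ultimately show ?thesis using N(2) by (intro emeasure_eq_0[of N Q X])
  qed
  have delta: "emeasure Q (S R) = (if Q = R then 1 else 0)" if QR: "Q \<in> \<R>" "R \<in> \<R>" for Q R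
  proof (cases "Q = R")
    case True
    interpret prob_space Q using Rp(1)[OF QR(1)] by (simp add: prob_on_def)
    have sp: "space Q = space M" using setsQ[OF QR(1)] by (rule sets_eq_imp_space_eq)
    have nl: "space M - S Q \<in> null_sets Q" using SQ[OF QR(1)] setsQ[OF QR(1)] by (auto intro: null_setsI)
    have "emeasure Q (space Q - (space M - S Q)) = emeasure Q (space Q)"
      using nl by (intro emeasure_Diff_null_set sets.top)
    moreover have "space Q - (space M - S Q) = S Q"
      using sp sets.sets_into_space[OF SQ(1)[OF QR(1)]] by auto
    ultimately show ?thesis using True emeasure_space_1 by simp
  next
    case False
    have "polar M \<P> (S Q \<inter> S R)" using qs QR False unfolding qs_disjointly_supported_def by blast
    then have "emeasure Q (S Q \<inter> S R) = 0" using QR polarR by blast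
    then have n1: "S Q \<inter> S R \<in> null_sets Q" using SQ QR setsQ by (auto intro: null_setsI)
    have n2: "space M - S Q \<in> null_sets Q" using SQ[OF QR(1)] setsQ[OF QR(1)] by (auto intro: null_setsI)
    have "S R \<subseteq> (S Q \<inter> S R) \<union> (space M - S Q)" using sets.sets_into_space[OF SQ(1)[OF QR(2)]] by blast
    moreover have "S R \<in> sets Q" using SQ QR setsQ by auto
    ultimately have "S R \<in> null_sets Q" using n1 n2 by (metis null_sets.Un null_sets_subset)
    then show ?thesis using False by (simp add: null_sets_def)
  qed
  have ac1: "abs_cont_family \<R> \<P>"
    unfolding abs_cont_family_def
  proof
    fix Q assume Q: "Q \<in> \<R>"
    have ne: "\<P> \<noteq> {}"
    proof
      assume "\<P> = {}"
      then have "emeasure Q (space M) = 0" using snull[of "space M" Q] Q by auto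
      moreover have "emeasure Q (space M) = 1"
        using Rp(1)[OF Q] setsQ[OF Q] sets_eq_imp_space_eq[OF setsQ[OF Q]]
        by (metis prob_on_def prob_space.emeasure_space_1)
      ultimately show False by simp
    qed
    show "\<exists>B\<in>\<P>. absolutely_continuous B Q"
      by (rule dominate[OF probs sc Rp(1)[OF Q] Rp(2)[OF Q] _ ne]) (use snull Q in blast)
  qed
  have ac2: "abs_cont_family \<P> (sconv M \<R>)"
    unfolding abs_cont_family_def
  proof
    fix P assume P: "P \<in> \<P>"
    interpret prob_space P using probs P by (simp add: prob_on_def)
    have sp: "space P = space M" using setsP[OF P] by (rule sets_eq_imp_space_eq)
    define C where "C = R_of \<R> S P"
    have CR: "C \<subseteq> \<R>" unfolding C_def R_of_def by auto
    have cC: "countable C"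
    proof (rule countable_ae_disjoint[of P C S])
      show "finite_measure P" by unfold_locales
      fix Q assume Q: "Q \<in> C"
      then have "emeasure P (S Q) > 0" unfolding C_def R_of_def by auto
      then show "S Q \<in> sets P \<and> measure P (S Q) > 0"
        using SQ CR Q setsP[OF P] by (auto simp: emeasure_eq_measure)
    next
      fix Q Q' assume QQ: "Q \<in> C" "Q' \<in> C" "Q \<noteq> Q'"
      then have "polar M \<P> (S Q \<inter> S Q')" using qs CR unfolding qs_disjointly_supported_def by blast
      then have "emeasure P (S Q \<inter> S Q') = 0" using P SQ QQ CR setsP by (intro polar_null) auto
      moreover have "S Q \<inter> S Q' \<in> sets P" using SQ QQ CR setsP[OF P] by auto
      ultimately show "S Q \<inter> S Q' \<in> null_sets P" by (rule null_setsI)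
    qed
    let ?U = "\<Union>Q\<in>C. S Q"
    have U1: "emeasure P ?U = 1" using un P unfolding C_def by blast
    then have Us: "?U \<in> sets P" using emeasure_notin_sets by fastforce
    have "emeasure P (space P - ?U) = emeasure P (space P) - emeasure P ?U"
      using Us by (intro emeasure_compl) auto
    then have "emeasure P (space M - ?U) = 0" using U1 emeasure_space_1 sp by simp
    moreover have "space M - ?U \<in> sets P" using Us sp by (metis sets.compl_sets)
    ultimately have Cn: "space M - ?U \<in> null_sets P" by (rule null_setsI)
    have Cne: "C \<noteq> {}"
    proof
      assume "C = {}" then show False using U1 by simp
    qed
    define Qs where "Qs = from_nat_into C"
    have QsC: "Qs n \<in> C" for n unfolding Qs_def using Cne by (rule from_nat_into)
    define B where "B = mixture M Qs (\<lambda>n. (1/2)^Suc n)"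
    have "B \<in> sconv M \<R>" unfolding sconv_def B_def using QsC CR power_half_series by fastforce
    moreover have "absolutely_continuous B P"
      unfolding absolutely_continuous_def
    proof
      fix N assume N: "N \<in> null_sets B"
      have NM: "N \<in> sets M" using N by (simp add: B_def null_sets_def)
      have "emeasure B N = 0" using N by (rule null_setsD1)
      then have z: "emeasure (Qs n) N = 0" for n
        using null_mixture[of Qs M N "\<lambda>n. (1/2)^Suc n"] NM setsQ QsC CR unfolding B_def by auto
      have zz: "N \<inter> S Q \<in> null_sets P" if Q: "Q \<in> C" for Q
      proof -
        obtain n where "Qs n = Q" using from_nat_into_surj[OF cC Q] unfolding Qs_def by blast
        then have "emeasure Q N = 0" using z by blast
        moreover have "emeasure Q (N \<inter> S Q) \<le> emeasure Q N"
          using NM setsQ Q CR by (intro emeasure_mono) auto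
        ultimately have "emeasure Q (N \<inter> S Q) = 0" by simp
        then have "polar M \<P> (N \<inter> S Q)" using Rp(2) Q CR NM unfolding supported_with_def by blast
        then have "emeasure P (N \<inter> S Q) = 0" using P NM SQ Q CR setsP by (intro polar_null) auto
        moreover have "N \<inter> S Q \<in> sets P" using NM SQ Q CR setsP[OF P] by auto
        ultimately show ?thesis by (rule null_setsI)
      qed
      have "(\<Union>Q\<in>C. N \<inter> S Q) \<in> null_sets P" using cC zz by (rule null_sets_UN')
      then have nn: "(space M - ?U) \<union> (\<Union>Q\<in>C. N \<inter> S Q) \<in> null_sets P" using Cn by (metis null_sets.Un)
      have "N \<subseteq> (space M - ?U) \<union> (\<Union>Q\<in>C. N \<inter> S Q)" using sets.sets_into_space[OF NM] by blast
      moreover have "N \<in> sets P" using NM setsP[OF P] by simp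
      ultimately show "N \<in> null_sets P" using nn by (metis null_sets_subset)
    qed
    ultimately show "\<exists>B\<in>sconv M \<R>. absolutely_continuous B P" by blast
  qed
  show ?thesis unfolding pre_Hahn_localizable_def
    by (intro exI[of _ \<R>] exI[of _ S] conjI ballI) (simp_all add: Rp(1) SQ(1) delta ac1 ac2)
qed

theorem lemma3p10:
  fixes M :: "'a measure" and \<P> :: "'a measure set"
  assumes "\<forall>P\<in>\<P>. prob_on M P"
    and "sigma_convex M \<P>"
  shows "(class_S M \<P> \<and>
          (\<exists>\<R> S. supported_alternative M \<P> \<R> S \<and> qs_disjointly_supported M \<P> \<R> S \<and>
                 (\<forall>P\<in>\<P>. emeasure P (\<Union>Q\<in>R_of \<R> S P. S Q) = 1)))
         \<longleftrightarrow> pre_Hahn_localizable M \<P>"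
proof
  assume "class_S M \<P> \<and>
          (\<exists>\<R> S. supported_alternative M \<P> \<R> S \<and> qs_disjointly_supported M \<P> \<R> S \<and>
                 (\<forall>P\<in>\<P>. emeasure P (\<Union>Q\<in>R_of \<R> S P. S Q) = 1))"
  then obtain \<R> S where "supported_alternative M \<P> \<R> S" "qs_disjointly_supported M \<P> \<R> S"
    "\<forall>P\<in>\<P>. emeasure P (\<Union>Q\<in>R_of \<R> S P. S Q) = 1" by blast
  then show "pre_Hahn_localizable M \<P>" using dir12 assms by blast
next
  assume "pre_Hahn_localizable M \<P>"
  from dir21[OF assms(1) this] obtain \<R> S where "supported_alternative M \<P> \<R> S"
    "qs_disjointly_supported M \<P> \<R> S" "\<forall>P\<in>\<P>. emeasure P (\<Union>Q\<in>R_of \<R> S P. S Q) = 1" by blast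
  then show "class_S M \<P> \<and>
          (\<exists>\<R> S. supported_alternative M \<P> \<R> S \<and> qs_disjointly_supported M \<P> \<R> S \<and>
                 (\<forall>P\<in>\<P>. emeasure P (\<Union>Q\<in>R_of \<R> S P. S Q) = 1))"
    unfolding class_S_def by blast
qed

end
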